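(* Suppose that during gradient descent training with step size $\eta$, for some $\omega>0$ and all iterations $s=0,1,\dots,K$, $\|\mathbf{f}(s)-\mathbf{y}\|_2^2\le(1-\frac{\eta\omega}{2})^s\|\mathbf{f}(0)-\mathbf{y}\|_2^2$. Then for each $k$, $$|g_k(s)-g_k(0)|\le\frac{4\sqrt n\,\|\mathbf{f}(0)-\mathbf{y}\|_2}{\sqrt m\,\omega}\quad\text{for } s=0,1,\dots,K+1.$$
   Context: Data $(\mathbf{x}_i,y_i)\in\mathbb{R}^d\times\mathbb{R}$, $i=1,\dots,n$, with $\|\mathbf{x}_i\|_2\le1$. Network $f(\mathbf{x})=\frac{1}{\sqrt m}\sum_{k=1}^mc_k\sigma(g_k\mathbf{v}_k^\top\mathbf{x}/\|\mathbf{v}_k\|_2)$, $\sigma(s)=\max\{s,0\}$, $c_k\in\{-1,1\}$ fixed, initialized with $\mathbf{v}_k(0)\sim N(0,\alpha^2\mathbf{I})$, $g_k(0)=\|\mathbf{v}_k(0)\|_2/\alpha$. Gradient descent on $L=\frac12\sum_i(f(\mathbf{x}_i)-y_i)^2$: $\mathbf{v}_k(s+1)=\mathbf{v}_k(s)-\eta\partial L/\partial\mathbf{v}_k$, $g_k(s+1)=g_k(s)-\eta\partial L/\partial g_k$; $\mathbf{f}(s)$ predictions at iteration $s$, $\mathbf{y}$ targets. *)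

theory Defs
  imports "HOL-Analysis.Analysis"
begin

definition relu :: "real \<Rightarrow> real" where
  "relu s = max s 0"

definition relu_deriv :: "real \<Rightarrow> real" where
  "relu_deriv s = (if s > 0 then 1 else 0)"

definition net :: "nat \<Rightarrow> (nat \<Rightarrow> real) \<Rightarrow> (nat \<Rightarrow> real) \<Rightarrow> (nat \<Rightarrow> 'a::euclidean_space) \<Rightarrow> 'a \<Rightarrow> real" where
  "net m c g v x = (1 / sqrt (real m)) * (\<Sum>k<m. c k * relu (g k * (v k \<bullet> x) / norm (v k)))"

definition sqerr :: "nat \<Rightarrow> (nat \<Rightarrow> 'a::euclidean_space) \<Rightarrow> (nat \<Rightarrow> real) \<Rightarrow> nat \<Rightarrow> (nat \<Rightarrow> real) \<Rightarrow> (nat \<Rightarrow> real) \<Rightarrow> (nat \<Rightarrow> 'a) \<Rightarrow> real" where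
  "sqerr n X Y m c g v = (\<Sum>i<n. (net m c g v (X i) - Y i)^2)"

text \<open>Partial derivative of L = 1/2 sum_i (f(x_i) - y_i)^2 with respect to g_k.\<close>
definition dL_dg :: "nat \<Rightarrow> (nat \<Rightarrow> 'a::euclidean_space) \<Rightarrow> (nat \<Rightarrow> real) \<Rightarrow> nat \<Rightarrow> (nat \<Rightarrow> real) \<Rightarrow> (nat \<Rightarrow> real) \<Rightarrow> (nat \<Rightarrow> 'a) \<Rightarrow> nat \<Rightarrow> real" where
  "dL_dg n X Y m c g v k = (\<Sum>i<n. (net m c g v (X i) - Y i) * (1 / sqrt (real m)) * c k
      * relu_deriv (g k * (v k \<bullet> X i) / norm (v k)) * ((v k \<bullet> X i) / norm (v k)))"

text \<open>Gradient of L with respect to v_k.\<close>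
definition dL_dv :: "nat \<Rightarrow> (nat \<Rightarrow> 'a::euclidean_space) \<Rightarrow> (nat \<Rightarrow> real) \<Rightarrow> nat \<Rightarrow> (nat \<Rightarrow> real) \<Rightarrow> (nat \<Rightarrow> real) \<Rightarrow> (nat \<Rightarrow> 'a) \<Rightarrow> nat \<Rightarrow> 'a" where
  "dL_dv n X Y m c g v k = (\<Sum>i<n. ((net m c g v (X i) - Y i) * (1 / sqrt (real m)) * c k
      * relu_deriv (g k * (v k \<bullet> X i) / norm (v k)) * g k) *\<^sub>R
      ((1 / norm (v k)) *\<^sub>R X i - ((v k \<bullet> X i) / norm (v k) ^ 3) *\<^sub>R v k))"

end

theory Submission
  imports Defs
begin

lemma sum_abs_cs:
  fixes e :: "nat \<Rightarrow> real"
  shows "(\<Sum>i<n. \<bar>e i\<bar>) \<le> sqrt (real n) * sqrt (\<Sum>i<n. (e i)^2)"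
proof -
  have "(\<Sum>i<n. \<bar>e i\<bar>)^2 \<le> (\<Sum>i<n. \<bar>e i\<bar>^2) * real (card {..<n})"
    by (rule sum_squared_le_sum_of_squares)
  hence h: "(\<Sum>i<n. \<bar>e i\<bar>)^2 \<le> (\<Sum>i<n. (e i)^2) * real n" by simp
  have "(\<Sum>i<n. \<bar>e i\<bar>) = sqrt ((\<Sum>i<n. \<bar>e i\<bar>)^2)"
    by (simp add: sum_nonneg)
  also have "\<dots> \<le> sqrt ((\<Sum>i<n. (e i)^2) * real n)"
    using h real_sqrt_le_mono by blast
  finally show ?thesis by (simp add: real_sqrt_mult mult.commute)
qed

lemma abs5:
  fixes a s c x y :: real
  assumes "0 \<le> s"
  shows "\<bar>a * (1 / s) * c * x * y\<bar> = (\<bar>a\<bar> / s) * (\<bar>c\<bar> * \<bar>x * y\<bar>)"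
  using assms by (simp add: abs_mult)

lemma proj_le:
  fixes v x :: "'a::euclidean_space"
  assumes "norm x \<le> 1"
  shows "\<bar>(v \<bullet> x) / norm v\<bar> \<le> 1"
proof (cases "v = 0")
  case True then show ?thesis by simp
next
  case False
  hence np: "norm v > 0" by simp
  have "\<bar>v \<bullet> x\<bar> \<le> norm v * norm x" by (rule Cauchy_Schwarz_ineq2)
  also have "\<dots> \<le> norm v" using mult_left_le[OF assms norm_ge_zero] .
  finally have h: "\<bar>v \<bullet> x\<bar> \<le> norm v" .
  have "\<bar>(v \<bullet> x) / norm v\<bar> = \<bar>v \<bullet> x\<bar> / norm v" by (simp only: abs_divide abs_norm_cancel)
  also have "\<dots> \<le> 1" using h np by (simp only: pos_divide_le_eq mult_1_left)
  finally show ?thesis .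
qed

lemma dg_bound:
  fixes X :: "nat \<Rightarrow> 'a::euclidean_space"
  assumes data: "\<And>i. i < n \<Longrightarrow> norm (X i) \<le> 1"
    and ck: "c k = -1 \<or> c k = 1"
  shows "\<bar>dL_dg n X Y m c g v k\<bar> \<le> sqrt (real n) * sqrt (sqerr n X Y m c g v) / sqrt (real m)"
proof -
  let ?e = "\<lambda>i. net m c g v (X i) - Y i"
  have "\<bar>dL_dg n X Y m c g v k\<bar> \<le> (\<Sum>i<n. \<bar>(net m c g v (X i) - Y i) * (1 / sqrt (real m)) * c k
      * relu_deriv (g k * (v k \<bullet> X i) / norm (v k)) * ((v k \<bullet> X i) / norm (v k))\<bar>)"
    unfolding dL_dg_def by (rule sum_abs)
  also have "\<dots> \<le> (\<Sum>i<n. \<bar>?e i\<bar> / sqrt (real m))"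
  proof (rule sum_mono)
    fix i assume "i \<in> {..<n}"
    hence p: "\<bar>(v k \<bullet> X i) / norm (v k)\<bar> \<le> 1" using data proj_le by auto
    have r: "\<bar>relu_deriv (g k * (v k \<bullet> X i) / norm (v k))\<bar> \<le> 1" by (simp add: relu_deriv_def)
    have c1: "\<bar>c k\<bar> = 1" using ck by auto
    have B: "\<bar>relu_deriv (g k * (v k \<bullet> X i) / norm (v k)) * ((v k \<bullet> X i) / norm (v k))\<bar> \<le> 1"
      unfolding abs_mult using mult_le_one[OF r abs_ge_zero p] .
    have L: "(\<bar>?e i\<bar> / sqrt (real m)) * (\<bar>c k\<bar> * \<bar>relu_deriv (g k * (v k \<bullet> X i) / norm (v k)) * ((v k \<bullet> X i) / norm (v k))\<bar>)
       \<le> \<bar>?e i\<bar> / sqrt (real m)" unfolding c1 mult_1_left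
      by (rule mult_left_le[OF B]) simp
    have eq: "\<bar>?e i * (1 / sqrt (real m)) * c k
      * relu_deriv (g k * (v k \<bullet> X i) / norm (v k)) * ((v k \<bullet> X i) / norm (v k))\<bar>
      = (\<bar>?e i\<bar> / sqrt (real m)) * (\<bar>c k\<bar> * \<bar>relu_deriv (g k * (v k \<bullet> X i) / norm (v k)) * ((v k \<bullet> X i) / norm (v k))\<bar>)"
      by (rule abs5) simp
    show "\<bar>?e i * (1 / sqrt (real m)) * c k
      * relu_deriv (g k * (v k \<bullet> X i) / norm (v k)) * ((v k \<bullet> X i) / norm (v k))\<bar> \<le> \<bar>?e i\<bar> / sqrt (real m)"
      unfolding eq by (rule L)
  qed
  also have "\<dots> = (\<Sum>i<n. \<bar>?e i\<bar>) / sqrt (real m)" by (simp add: sum_divide_distrib)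
  also have "\<dots> \<le> sqrt (real n) * sqrt (\<Sum>i<n. (?e i)^2) / sqrt (real m)"
    by (rule divide_right_mono[OF sum_abs_cs]) simp
  finally show ?thesis unfolding sqerr_def .
qed

theorem lemmaC2:
  fixes X :: "nat \<Rightarrow> 'a::euclidean_space" and Y :: "nat \<Rightarrow> real"
    and n m K :: nat and c :: "nat \<Rightarrow> real"
    and gs :: "nat \<Rightarrow> nat \<Rightarrow> real" and vs :: "nat \<Rightarrow> nat \<Rightarrow> 'a"
    and \<eta> \<omega> \<alpha> :: real
  assumes data: "\<And>i. i < n \<Longrightarrow> norm (X i) \<le> 1"
    and m_pos: "0 < m"
    and signs: "\<And>k. k < m \<Longrightarrow> c k = -1 \<or> c k = 1"
    and alpha_pos: "0 < \<alpha>"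
    and init_g: "\<And>k. k < m \<Longrightarrow> gs 0 k = norm (vs 0 k) / \<alpha>"
    and step_v: "\<And>s k. k < m \<Longrightarrow>
        vs (Suc s) k = vs s k - \<eta> *\<^sub>R dL_dv n X Y m c (gs s) (vs s) k"
    and step_g: "\<And>s k. k < m \<Longrightarrow>
        gs (Suc s) k = gs s k - \<eta> * dL_dg n X Y m c (gs s) (vs s) k"
    and eta_pos: "0 < \<eta>"
    and omega_pos: "0 < \<omega>"
    and eta_omega: "\<eta> * \<omega> \<le> 2"
    and decay: "\<And>s. s \<le> K \<Longrightarrow>
        sqerr n X Y m c (gs s) (vs s) \<le> (1 - \<eta> * \<omega> / 2) ^ s * sqerr n X Y m c (gs 0) (vs 0)"
  shows "\<forall>k<m. \<forall>s\<le>K + 1. \<bar>gs s k - gs 0 k\<bar> \<le>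
           4 * sqrt (real n) * sqrt (sqerr n X Y m c (gs 0) (vs 0)) / (sqrt (real m) * \<omega>)"
proof (intro allI impI)
  fix k s assume km: "k < m" and sK: "s \<le> K + 1"
  define q where "q = 1 - \<eta> * \<omega> / 2"
  define r where "r = sqrt q"
  define E0 where "E0 = sqerr n X Y m c (gs 0) (vs 0)"
  define A where "A = sqrt (real n) * sqrt E0 / sqrt (real m)"
  have q0: "0 \<le> q" using eta_omega unfolding q_def by simp
  have q1: "q < 1" using eta_pos omega_pos unfolding q_def by simp
  have r0: "0 \<le> r" unfolding r_def using q0 by simp
  have r1: "r < 1" unfolding r_def using q0 q1 by simp
  have E0nn: "0 \<le> E0" unfolding E0_def sqerr_def by (simp add: sum_nonneg)
  have A0: "0 \<le> A" unfolding A_def using E0nn by simp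
  have stepb: "\<bar>dL_dg n X Y m c (gs t) (vs t) k\<bar> \<le> A * r ^ t" if "t \<le> K" for t
  proof -
    have "\<bar>dL_dg n X Y m c (gs t) (vs t) k\<bar> \<le> sqrt (real n) * sqrt (sqerr n X Y m c (gs t) (vs t)) / sqrt (real m)"
      by (rule dg_bound[where c=c and k=k, OF data signs[OF km]])
    also have "\<dots> \<le> sqrt (real n) * sqrt (q ^ t * E0) / sqrt (real m)"
      using decay[OF that] unfolding q_def E0_def
      by (intro divide_right_mono mult_left_mono real_sqrt_le_mono) auto
    also have "\<dots> = A * r ^ t" unfolding A_def r_def
      by (simp add: real_sqrt_mult real_sqrt_power)
    finally show ?thesis .
  qed
  have main: "s \<le> K + 1 \<Longrightarrow> \<bar>gs s k - gs 0 k\<bar> \<le> \<eta> * A * (\<Sum>t<s. r ^ t)" for s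
  proof (induction s)
    case 0 then show ?case by simp
  next
    case (Suc s)
    hence sK': "s \<le> K" by simp
    have "\<bar>gs (Suc s) k - gs 0 k\<bar> = \<bar>(gs s k - gs 0 k) - \<eta> * dL_dg n X Y m c (gs s) (vs s) k\<bar>"
      using step_g[OF km] by simp
    also have "\<dots> \<le> \<bar>gs s k - gs 0 k\<bar> + \<eta> * \<bar>dL_dg n X Y m c (gs s) (vs s) k\<bar>"
      using abs_triangle_ineq4[of "gs s k - gs 0 k" "\<eta> * dL_dg n X Y m c (gs s) (vs s) k"] eta_pos
      by (simp add: abs_mult)
    also have "\<dots> \<le> \<eta> * A * (\<Sum>t<s. r ^ t) + \<eta> * (A * r ^ s)"
      using Suc.IH sK' stepb[OF sK'] eta_pos by (intro add_mono mult_left_mono) auto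
    also have "\<dots> = \<eta> * A * (\<Sum>t<Suc s. r ^ t)" by (simp add: algebra_simps)
    finally show ?case .
  qed
  have gs: "(\<Sum>t<s. r ^ t) \<le> 1 / (1 - r)"
  proof -
    have "(\<Sum>t<s. r ^ t) = (1 - r ^ s) / (1 - r)"
      using r1 by (simp add: sum_gp_strict)
    also have "\<dots> \<le> 1 / (1 - r)" using r0 r1 by (intro divide_right_mono) auto
    finally show ?thesis .
  qed
  have rq: "1 / (1 - r) \<le> 2 / (1 - q)"
  proof -
    have "1 - q = (1 - r) * (1 + r)" unfolding r_def using q0 by (simp add: algebra_simps)
    also have "\<dots> \<le> (1 - r) * 2" using r1 r0 by (intro mult_left_mono) auto
    finally have "1 - q \<le> 2 * (1 - r)" by simp
    thus ?thesis using r1 q1 by (simp add: field_simps)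
  qed
  have "\<bar>gs s k - gs 0 k\<bar> \<le> \<eta> * A * (\<Sum>t<s. r ^ t)" using main sK by blast
  also have "\<dots> \<le> \<eta> * A * (2 / (1 - q))"
    using gs rq eta_pos A0 by (intro mult_left_mono) auto
  also have "\<dots> = 4 * A / \<omega>" unfolding q_def using eta_pos omega_pos by (simp add: field_simps)
  also have "\<dots> = 4 * sqrt (real n) * sqrt E0 / (sqrt (real m) * \<omega>)" unfolding A_def by simp
  finally show "\<bar>gs s k - gs 0 k\<bar> \<le>
           4 * sqrt (real n) * sqrt (sqerr n X Y m c (gs 0) (vs 0)) / (sqrt (real m) * \<omega>)"
    unfolding E0_def .
qed

end
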